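(* Let $n\geq a\geq 2$ be integers, and let $\ell$ be the smallest integer for which $\binom{\ell}{\lfloor \ell/2\rfloor}\geq a$. Then the Boolean lattice $(2^{[n-a+\ell]},\subseteq)$ of all subsets of $\{1,\dots,n-a+\ell\}$ ordered by inclusion contains every $n$-element poset which has an antichain of size $a$.
   Context: A poset $(U,\leq)$ contains a poset $(P,\preceq)$ if there is a subset $P'\subseteq U$ such that $(P',\leq)$ (the restriction of $\leq$ to $P'$) is isomorphic to $(P,\preceq)$; i.e. containment is as an induced subposet. An antichain is a set of pairwise incomparable elements. *)

theory Defs
  imports Main
begin

definition poset_contains :: "'b set \<Rightarrow> ('b \<Rightarrow> 'b \<Rightarrow> bool) \<Rightarrow> 'a set \<Rightarrow> ('a \<times> 'a) set \<Rightarrow> bool" where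
  "poset_contains U leU P r \<longleftrightarrow>
     (\<exists>U' \<subseteq> U. \<exists>f. bij_betw f P U' \<and>
        (\<forall>x\<in>P. \<forall>y\<in>P. (x, y) \<in> r \<longleftrightarrow> leU (f x) (f y)))"

definition is_antichain :: "'a set \<Rightarrow> ('a \<times> 'a) set \<Rightarrow> 'a set \<Rightarrow> bool" where
  "is_antichain P r A \<longleftrightarrow> A \<subseteq> P \<and> (\<forall>x\<in>A. \<forall>y\<in>A. x \<noteq> y \<longrightarrow> (x, y) \<notin> r)"

end

theory Submission
  imports Defs "HOL.Binomial_Plus"
begin

definition good :: "'a set \<Rightarrow> ('a \<times> 'a) set \<Rightarrow> ('a \<Rightarrow> nat set) \<Rightarrow> nat \<Rightarrow> bool" where
  "good Q r f N \<longleftrightarrow> (\<forall>x\<in>Q. f x \<subseteq> {1..N} \<and> f x \<noteq> {} \<and> f x \<noteq> {1..N}) \<and>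
     (\<forall>x\<in>Q. \<forall>y\<in>Q. (x, y) \<in> r \<longleftrightarrow> f x \<subseteq> f y)"

lemma ex_max_on:
  fixes d :: "'a \<Rightarrow> nat"
  assumes "finite S" "S \<noteq> {}"
  shows "\<exists>z\<in>S. \<forall>y\<in>S. d y \<le> d z"
proof -
  have "Max (d ` S) \<in> d ` S" using assms by simp
  then obtain z where "z \<in> S" "d z = Max (d ` S)" by auto
  moreover have "\<forall>y\<in>S. d y \<le> Max (d ` S)" using assms by (auto intro: Max_ge)
  ultimately show ?thesis by metis
qed

lemma ex_min_on:
  fixes d :: "'a \<Rightarrow> nat"
  assumes "finite S" "S \<noteq> {}"
  shows "\<exists>z\<in>S. \<forall>y\<in>S. d z \<le> d y"
proof -
  have "Min (d ` S) \<in> d ` S" using assms by simp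
  then obtain z where "z \<in> S" "d z = Min (d ` S)" by auto
  moreover have "\<forall>y\<in>S. Min (d ` S) \<le> d y" using assms by (auto intro: Min_le)
  ultimately show ?thesis by metis
qed

lemma find_extreme:
  assumes fin: "finite Q"
    and refl: "\<forall>x\<in>Q. (x, x) \<in> r" and tr: "trans r" and anti: "antisym r"
    and AQ: "A \<subseteq> Q" and ac: "\<forall>x\<in>A. \<forall>y\<in>A. (x, y) \<in> r \<longrightarrow> x = y"
    and ne: "Q - A \<noteq> {}"
  shows "\<exists>z\<in>Q - A. (\<forall>y\<in>Q. (y, z) \<in> r \<longrightarrow> y = z) \<or> (\<forall>y\<in>Q. (z, y) \<in> r \<longrightarrow> y = z)"
proof -
  define d where "d x = card {y\<in>Q. (y, x) \<in> r}" for x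
  have dlt: "d x < d y" if "x \<in> Q" "y \<in> Q" "(x, y) \<in> r" "x \<noteq> y" for x y
  proof -
    have "{w\<in>Q. (w, x) \<in> r} \<subset> {w\<in>Q. (w, y) \<in> r}"
    proof
      show "{w\<in>Q. (w, x) \<in> r} \<subseteq> {w\<in>Q. (w, y) \<in> r}"
        using that tr by (auto dest: transD)
      have "y \<notin> {w\<in>Q. (w, x) \<in> r}" using that anti by (auto dest: antisymD)
      moreover have "y \<in> {w\<in>Q. (w, y) \<in> r}" using that refl by auto
      ultimately show "{w\<in>Q. (w, x) \<in> r} \<noteq> {w\<in>Q. (w, y) \<in> r}" by blast
    qed
    then show ?thesis unfolding d_def by (intro psubset_card_mono) (use fin in auto)
  qed
  obtain z where z: "z \<in> Q - A" and zmax: "\<forall>y\<in>Q - A. d y \<le> d z"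
    using ex_max_on[of "Q - A" d] fin ne by auto
  show ?thesis
  proof (cases "\<forall>y\<in>Q. (z, y) \<in> r \<longrightarrow> y = z")
    case True then show ?thesis using z by blast
  next
    case False
    then obtain y where y: "y \<in> Q" "(z, y) \<in> r" "y \<noteq> z" by blast
    have "d z < d y" using dlt y z by auto
    then have yA: "y \<in> A" using zmax y by force
    define S where "S = {w\<in>Q. (w, z) \<in> r}"
    have "z \<in> S" using z refl S_def by auto
    then obtain m where m: "m \<in> S" and mmin: "\<forall>w\<in>S. d m \<le> d w"
      using ex_min_on[of S d] fin S_def by auto
    have mQ: "m \<in> Q" and mz: "(m, z) \<in> r" using m S_def by auto
    have mA: "m \<notin> A"
    proof
      assume "m \<in> A"
      have "(m, y) \<in> r" using mz y tr by (auto dest: transD)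
      then have "m = y" using ac \<open>m \<in> A\<close> yA by blast
      then show False using mz y anti by (auto dest: antisymD)
    qed
    have "\<forall>w\<in>Q. (w, m) \<in> r \<longrightarrow> w = m"
    proof (intro ballI impI)
      fix w assume w: "w \<in> Q" "(w, m) \<in> r"
      show "w = m"
      proof (rule ccontr)
        assume "w \<noteq> m"
        then have "d w < d m" using dlt w mQ by auto
        moreover have "w \<in> S" using w mz tr S_def by (auto dest: transD)
        ultimately show False using mmin by force
      qed
    qed
    then show ?thesis using mQ mA by blast
  qed
qed

lemma main_ind:
  assumes fin: "finite P"
    and refl: "\<forall>x\<in>P. (x, x) \<in> r" and tr: "trans r" and anti: "antisym r"
    and AP: "A \<subseteq> P" and ac: "\<forall>x\<in>A. \<forall>y\<in>A. (x, y) \<in> r \<longrightarrow> x = y"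
    and g: "good A r f0 m" and m1: "1 \<le> m"
  shows "\<forall>Q. A \<subseteq> Q \<longrightarrow> Q \<subseteq> P \<longrightarrow> card (Q - A) = k \<longrightarrow> (\<exists>f. good Q r f (m + k))"
proof (induction k)
  case 0
  show ?case
  proof (intro allI impI)
    fix Q assume Q: "A \<subseteq> Q" "Q \<subseteq> P" "card (Q - A) = 0"
    have "finite (Q - A)" using Q fin finite_subset by blast
    then have "Q = A" using Q by auto
    have "good A r f0 m" by (rule g)
    moreover have "\<forall>x\<in>A. \<forall>y\<in>A. (x, y) \<in> r \<longleftrightarrow> f0 x \<subseteq> f0 y"
      using g ac refl AP unfolding good_def by blast
    ultimately show "\<exists>f. good Q r f (m + 0)" using \<open>Q = A\<close> by auto
  qed
next
  case (Suc k)
  show ?case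
  proof (intro allI impI)
    fix Q assume Q: "A \<subseteq> Q" "Q \<subseteq> P" "card (Q - A) = Suc k"
    have finQ: "finite Q" using Q fin finite_subset by blast
    have "Q - A \<noteq> {}" using Q by auto
    then obtain z where z: "z \<in> Q - A" and ext:
      "(\<forall>y\<in>Q. (y, z) \<in> r \<longrightarrow> y = z) \<or> (\<forall>y\<in>Q. (z, y) \<in> r \<longrightarrow> y = z)"
      using find_extreme[of Q r A] finQ refl tr anti Q ac by blast
    define Q' where "Q' = Q - {z}"
    have "Q' - A = (Q - A) - {z}" using Q'_def by auto
    then have "card (Q' - A) = k" using Q z finQ by simp
    moreover have "A \<subseteq> Q'" "Q' \<subseteq> P" using Q z Q'_def by auto
    ultimately obtain f where f: "good Q' r f (m + k)" using Suc.IH by blast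
    define N where "N = m + k"
    have N1: "1 \<le> N" using m1 N_def by simp
    have fN: "good Q' r f N" using f N_def by simp
    have ivl: "{1..Suc N} = insert (Suc N) {1..N}" by auto
    have fx: "f x \<subseteq> {1..N}" "f x \<noteq> {}" "f x \<noteq> {1..N}" if "x \<in> Q'" for x
      using fN that unfolding good_def by auto
    have fo: "(x, y) \<in> r \<longleftrightarrow> f x \<subseteq> f y" if "x \<in> Q'" "y \<in> Q'" for x y
      using fN that unfolding good_def by auto
    have notin: "Suc N \<notin> f x" if "x \<in> Q'" for x using fx[OF that] by auto
    have zQ: "z \<in> Q" "z \<notin> A" using z by auto
    have Qsplit: "x \<in> Q \<Longrightarrow> x \<noteq> z \<Longrightarrow> x \<in> Q'" for x using Q'_def by auto
    from ext show "\<exists>f. good Q r f (m + Suc k)"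
    proof
      assume zmin: "\<forall>y\<in>Q. (y, z) \<in> r \<longrightarrow> y = z"
      define f' where "f' x = (if x = z then {Suc N} else if (z, x) \<in> r then insert (Suc N) (f x) else f x)" for x
      have "good Q r f' (Suc N)"
        unfolding good_def
      proof (intro conjI ballI)
        fix x assume x: "x \<in> Q"
        show "f' x \<subseteq> {1..Suc N}"
        proof (cases "x = z")
          case False
          then have "f x \<subseteq> {1..Suc N}" using fx[OF Qsplit[OF x False]] by auto
          then show ?thesis using False unfolding f'_def by auto
        qed (auto simp: f'_def)
        show "f' x \<noteq> {}" using fx[OF Qsplit[OF x]] unfolding f'_def by auto
        show "f' x \<noteq> {1..Suc N}"
        proof (cases "x = z")
          case True
          then show ?thesis using N1 unfolding f'_def by (auto simp: set_eq_iff)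
        next
          case False
          with fx[OF Qsplit[OF x False]] obtain i where "i \<in> {1..N}" "i \<notin> f x" by blast
          then have "i \<in> {1..Suc N}" "i \<notin> f' x" using False unfolding f'_def by auto
          then show ?thesis by blast
        qed
      next
        fix x y assume x: "x \<in> Q" and y: "y \<in> Q"
        show "(x, y) \<in> r \<longleftrightarrow> f' x \<subseteq> f' y"
        proof (cases "x = z")
          case xz: True
          show ?thesis
          proof (cases "y = z")
            case True then show ?thesis using xz refl Q z unfolding f'_def by auto
          next
            case False
            then show ?thesis using xz notin[OF Qsplit[OF y False]] unfolding f'_def by auto
          qed
        next
          case xz: False
          have x': "x \<in> Q'" using Qsplit[OF x xz] .
          show ?thesis
          proof (cases "y = z")
            case True
            have "\<not> f' x \<subseteq> {Suc N}"
            proof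
              assume "f' x \<subseteq> {Suc N}"
              then have "f x \<subseteq> {Suc N}" using xz unfolding f'_def by (auto split: if_splits)
              then show False using fx[OF x'] notin[OF x'] by auto
            qed
            then show ?thesis using True xz zmin x unfolding f'_def by auto
          next
            case yz: False
            have y': "y \<in> Q'" using Qsplit[OF y yz] .
            have "f' x \<subseteq> f' y \<longleftrightarrow> f x \<subseteq> f y \<and> ((z, x) \<in> r \<longrightarrow> (z, y) \<in> r)"
              using xz yz notin[OF x'] notin[OF y'] unfolding f'_def by auto
            moreover have "(x, y) \<in> r \<Longrightarrow> (z, x) \<in> r \<Longrightarrow> (z, y) \<in> r" using tr by (auto dest: transD)
            ultimately show ?thesis using fo[OF x' y'] by blast
          qed
        qed
      qed
      then show ?thesis using N_def by auto
    next
      assume zmax: "\<forall>y\<in>Q. (z, y) \<in> r \<longrightarrow> y = z"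
      define f' where "f' x = (if x = z then {1..N} else if (x, z) \<in> r then f x else insert (Suc N) (f x))" for x
      have "good Q r f' (Suc N)"
        unfolding good_def
      proof (intro conjI ballI)
        fix x assume x: "x \<in> Q"
        show "f' x \<subseteq> {1..Suc N}"
        proof (cases "x = z")
          case False
          then have "f x \<subseteq> {1..Suc N}" using fx[OF Qsplit[OF x False]] by auto
          then show ?thesis using False unfolding f'_def by auto
        qed (auto simp: f'_def)
        show "f' x \<noteq> {}" using fx[OF Qsplit[OF x]] N1 unfolding f'_def by auto
        show "f' x \<noteq> {1..Suc N}"
        proof (cases "x = z")
          case True
          have "Suc N \<notin> {1..N}" "Suc N \<in> {1..Suc N}" by auto
          moreover have "f' x = {1..N}" using True unfolding f'_def by simp
          ultimately show ?thesis by blast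
        next
          case False
          with fx[OF Qsplit[OF x False]] obtain i where "i \<in> {1..N}" "i \<notin> f x" by blast
          then have "i \<in> {1..Suc N}" "i \<notin> f' x" using False unfolding f'_def by auto
          then show ?thesis by blast
        qed
      next
        fix x y assume x: "x \<in> Q" and y: "y \<in> Q"
        show "(x, y) \<in> r \<longleftrightarrow> f' x \<subseteq> f' y"
        proof (cases "x = z")
          case xz: True
          show ?thesis
          proof (cases "y = z")
            case True then show ?thesis using xz refl Q z unfolding f'_def by auto
          next
            case False
            have y': "y \<in> Q'" using Qsplit[OF y False] .
            have "\<not> {1..N} \<subseteq> f y" using fx[OF y'] by auto
            then have "\<not> {1..N} \<subseteq> f' y" using False unfolding f'_def by auto
            then show ?thesis using xz False zmax y unfolding f'_def by auto
          qed
        next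
          case xz: False
          have x': "x \<in> Q'" using Qsplit[OF x xz] .
          show ?thesis
          proof (cases "y = z")
            case True
            then show ?thesis using xz fx[OF x'] unfolding f'_def by auto
          next
            case yz: False
            have y': "y \<in> Q'" using Qsplit[OF y yz] .
            have "f' x \<subseteq> f' y \<longleftrightarrow> f x \<subseteq> f y \<and> ((y, z) \<in> r \<longrightarrow> (x, z) \<in> r)"
              using xz yz notin[OF x'] notin[OF y'] unfolding f'_def by auto
            moreover have "(x, y) \<in> r \<Longrightarrow> (y, z) \<in> r \<Longrightarrow> (x, z) \<in> r" using tr by (auto dest: transD)
            ultimately show ?thesis using fo[OF x' y'] by blast
          qed
        qed
      qed
      then show ?thesis using N_def by auto
    qed
  qed
qed


theorem lemma3p2:
  fixes n a :: nat and P :: "'a set" and r :: "('a \<times> 'a) set"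
  assumes "2 \<le> a" and "a \<le> n"
    and "finite P" and "card P = n"
    and "partial_order_on P r"
    and "\<exists>A. is_antichain P r A \<and> card A = a"
  shows "poset_contains (Pow {1 .. n - a + (LEAST l::nat. a \<le> l choose (l div 2))}) (\<subseteq>) P r"
proof -
  obtain A where A: "is_antichain P r A" "card A = a" using assms(6) by blast
  have AP: "A \<subseteq> P" and ac: "\<forall>x\<in>A. \<forall>y\<in>A. (x, y) \<in> r \<longrightarrow> x = y"
    using A unfolding is_antichain_def by auto
  have finA: "finite A" using AP assms(3) finite_subset by blast
  have refl: "\<forall>x\<in>P. (x, x) \<in> r" and tr: "trans r" and anti: "antisym r"
    using assms(5) unfolding partial_order_on_def preorder_on_def refl_on_def by auto
  define l where "l = (LEAST l::nat. a \<le> l choose (l div 2))"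
  have ex: "\<exists>l::nat. a \<le> l choose (l div 2)"
  proof
    show "a \<le> a choose (a div 2)" using binomial_maximum[of a 1] by simp
  qed
  have la: "a \<le> l choose (l div 2)" unfolding l_def by (rule LeastI_ex[OF ex])
  have l2: "2 \<le> l"
  proof (rule ccontr)
    assume "\<not> 2 \<le> l"
    then have "l = 0 \<or> l = 1" by auto
    then have "l choose (l div 2) = 1" by auto
    then show False using la assms(1) by simp
  qed
  define M where "M = {S. S \<subseteq> {1..l} \<and> card S = l div 2}"
  have "card M = l choose (l div 2)" unfolding M_def using n_subsets[of "{1..l}" "l div 2"] by simp
  moreover have "finite M" unfolding M_def by simp
  ultimately obtain g where g: "g ` A \<subseteq> M" "inj_on g A"
    using card_le_inj[of A M] finA A(2) la by auto
  have gA: "good A r g l"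
    unfolding good_def
  proof (intro conjI ballI)
    fix x assume x: "x \<in> A"
    have gx: "g x \<subseteq> {1..l}" "card (g x) = l div 2" using g x M_def by auto
    show "g x \<subseteq> {1..l}" using gx by simp
    show "g x \<noteq> {}" using gx l2 by auto
    show "g x \<noteq> {1..l}" using gx l2 by auto
  next
    fix x y assume x: "x \<in> A" and y: "y \<in> A"
    have gx: "g x \<subseteq> {1..l}" "card (g x) = l div 2" using g x M_def by auto
    have gy: "g y \<subseteq> {1..l}" "card (g y) = l div 2" using g y M_def by auto
    show "(x, y) \<in> r \<longleftrightarrow> g x \<subseteq> g y"
    proof
      assume "(x, y) \<in> r" then have "x = y" using ac x y by blast
      then show "g x \<subseteq> g y" by simp
    next
      assume sub: "g x \<subseteq> g y"
      have "finite (g y)" using gy finite_subset by blast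
      then have "g x = g y" using card_subset_eq[OF _ sub] gx gy by simp
      then have "x = y" using g(2) x y inj_on_def by metis
      then show "(x, y) \<in> r" using refl AP x by auto
    qed
  qed
  have "card (P - A) = n - a" using card_Diff_subset[OF finA AP] assms(4) A(2) by simp
  moreover have "1 \<le> l" using l2 by simp
  note mi = main_ind[OF assms(3) refl tr anti AP ac gA this, of "n - a"]
  ultimately obtain f where f: "good P r f (l + (n - a))"
    using mi AP by blast
  have fsub: "f x \<subseteq> {1..n - a + l}" if "x \<in> P" for x using f that unfolding good_def by (auto simp: add.commute)
  have fo: "(x, y) \<in> r \<longleftrightarrow> f x \<subseteq> f y" if "x \<in> P" "y \<in> P" for x y
    using f that unfolding good_def by auto
  have inj: "inj_on f P"
  proof (rule inj_onI)
    fix x y assume "x \<in> P" "y \<in> P" "f x = f y"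
    then have "(x, y) \<in> r" "(y, x) \<in> r" using fo by auto
    then show "x = y" using anti by (auto dest: antisymD)
  qed
  show ?thesis
    unfolding poset_contains_def l_def[symmetric]
  proof (intro exI conjI)
    show "f ` P \<subseteq> Pow {1..n - a + l}" using fsub by auto
    show "bij_betw f P (f ` P)" using inj by (simp add: bij_betw_def)
    show "\<forall>x\<in>P. \<forall>y\<in>P. (x, y) \<in> r \<longleftrightarrow> f x \<subseteq> f y" using fo by blast
  qed
qed

end
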